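(* Let $E/\mathbb{Q}$ be an elliptic curve of conductor $N$, $p$ a prime of good supersingular reduction, and $\chi$ the trivial or a quadratic Dirichlet character. Let $Q$ be the largest divisor of $N$ coprime to $p$ and to the conductor of $\chi$. Suppose $L_p^\sharp(E,\chi,T)$ and $L_p^\flat(E,\chi,T)$ are nonzero and write their Taylor expansions at $T=0$ as $$L_p^\sharp(E,\chi,T)=a_\sharp T^{m_\sharp}+b_\sharp T^{m_\sharp+1}+\cdots,\qquad L_p^\flat(E,\chi,T)=a_\flat T^{m_\flat}+b_\flat T^{m_\flat+1}+\cdots$$ with $a_\sharp,a_\flat\neq0$. Then $$b_\sharp=-\frac{a_\sharp}{2}\big(\log_\gamma(Q)+m_\sharp\big),\qquad b_\flat=-\frac{a_\flat}{2}\big(\log_\gamma(Q)+m_\flat\big).$$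
   Context: Notation: $\gamma$ is a topological generator of $\mathrm{Gal}(\mathbb{Q}_\infty/\mathbb{Q})\cong\mathbb{Z}_p$, $\kappa$ the cyclotomic character, $\langle x\rangle$ the projection of $x\in\mathbb{Z}_p^\times$ to $1+p\mathbb{Z}_p$ ($1+4\mathbb{Z}_2$ if $p=2$), $\log_\gamma(x)=\log\langle x\rangle/\log\kappa(\gamma)$, and $(1+T)^a=\sum_n\binom{a}{n}T^n$ for $a\in\mathbb{Z}_p$. For a Dirichlet character $\psi$, $c_Q\in\{\pm1\}$ is defined by $f|_{\left(\begin{smallmatrix}0&-1\\Q&0\end{smallmatrix}\right)}=c_Qf$, $f$ the newform of $E$. The $\sharp/\flat$ $p$-adic $L$-functions $L_p^\sharp(E,\psi,T),L_p^\flat(E,\psi,T)$ (Sprung's completed versions) are integral power series satisfying $(L_\alpha(E,\psi,T),L_\beta(E,\psi,T))=(L_p^\sharp,L_p^\flat)\mathcal{L}og_{\alpha,\beta}(1+T)$ with $L_\alpha,L_\beta$ the Amice–Vélu–Višik $p$-adic $L$-functions, and the functional equation, for $\bullet\in\{\sharp,\flat\}$, $$L_p^{\bullet}(E,\psi,T)=-(1+T)^{-\log_\gamma(Q)}\,\overline{\psi}(-Q)\,c_Q\,L_p^{\bullet}\Big(E,\overline{\psi},\tfrac{1}{1+T}-1\Big).$$ *)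

theory Defs
  imports "HOL-Computational_Algebra.Formal_Power_Series"
begin

text \<open>The coefficient field K (a characteristic-zero field, standing
for C_p) is a type variable. For lam in K, the series (1+T)^lam is the binomial series
fps_binomial lam (coefficients lam gchoose n). The substitution T := 1/(1+T) - 1 is
composition with the power series inverse (1 + X) - 1 (which has zero constant term).\<close>

definition subst_series :: "'a::field fps" where
  "subst_series = inverse (1 + fps_X) - 1"

text \<open>Functional equation of the sharp/flat p-adic L-function for a real character
chi (so chi-bar = chi):
  F(T) = - (1+T)^(-lam) * chi(-Q) * c_Q * F(1/(1+T) - 1),  lam = log_gamma(Q).\<close>

definition satisfies_FE :: "'a::field_char_0 \<Rightarrow> 'a \<Rightarrow> 'a \<Rightarrow> 'a fps \<Rightarrow> bool" where
  "satisfies_FE lam chiQ cQ F \<longleftrightarrow>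
     F = - (fps_binomial (- lam) * fps_const (chiQ * cQ) * (F oo subst_series))"

end

theory Submission
  imports Defs
begin

unbundle fps_syntax

lemma pow_nth1: "((f::'a::comm_ring_1 fps)^n) $ 1 = of_nat n * (f$0)^(n-1) * f$1"
proof (induction n)
  case (Suc n)
  have "(f^Suc n) $ 1 = f$0 * (f^n)$1 + f$1 * (f^n)$0"
    by (simp add: fps_mult_nth numeral_2_eq_2)
  also have "\<dots> = f$0 * (of_nat n * (f$0)^(n-1) * f$1) + f$1 * (f$0)^n"
    using Suc by (simp add: fps_nth_power_0)
  also have "\<dots> = of_nat (Suc n) * (f$0)^n * f$1"
    by (cases n) (simp_all add: algebra_simps)
  finally show ?case by simp
qed simp

lemma S_nth: "(subst_series :: 'a::field fps) $ n = (if n = 0 then 0 else (-1)^n)"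
  by (simp add: subst_series_def fps_inverse_fps_X_plus1)

lemma S_eq: "(subst_series :: 'a::field fps) = fps_X * Abs_fps (\<lambda>n. (-1)^(n+1))"
  by (rule fps_ext) (auto simp: S_nth fps_X_mult_nth gr0_conv_Suc)

lemma main:
  fixes F :: "'a::field_char_0 fps"
  assumes fe: "satisfies_FE lam chiQ cQ F" and nz: "F \<noteq> 0"
  shows "F $ (subdegree F + 1) = - (F $ subdegree F) / 2 * (lam + of_nat (subdegree F))"
proof -
  define m where "m = subdegree F"
  define G where "G = fps_shift m F"
  define S where "S = (subst_series :: 'a fps)"
  define V where "V = Abs_fps (\<lambda>n. (-1::'a)^(n+1))"
  define W where "W = (G oo S) * V^m"
  define B where "B = fps_binomial (- lam)"
  define c where "c = chiQ * cQ"
  have S0: "S $ 0 = 0" by (simp add: S_def S_nth)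
  have S1: "S $ 1 = -1" by (simp add: S_def S_nth)
  have F: "F = G * fps_X ^ m" unfolding G_def m_def by (rule subdegree_decompose)
  have SV: "S = fps_X * V" unfolding S_def V_def by (rule S_eq)
  have "F oo S = (G oo S) * (fps_X oo S)^m"
    by (subst F) (simp add: fps_compose_mult_distrib[OF S0] fps_compose_power[OF S0])
  also have "\<dots> = W * fps_X^m" by (simp add: S0 SV W_def power_mult_distrib algebra_simps)
  finally have FS: "F oo S = W * fps_X^m" .
  have eq: "F = - (B * fps_const c * W) * fps_X^m"
    using fe unfolding satisfies_FE_def B_def c_def S_def[symmetric] FS by (simp add: algebra_simps)
  have Fk: "F $ (m + k) = - c * (B * W) $ k" for k
  proof -
    have "F = fps_const (- c) * ((B * W) * fps_X^m)" by (subst eq, subst fps_const_neg[symmetric]) (simp add: algebra_simps del: fps_const_neg)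
    then show ?thesis by (metis fps_X_power_mult_right_nth fps_mult_left_const_nth le_add1 add_diff_cancel_left' not_add_less1)
  qed
  have G0: "G $ 0 = F $ m" and G1: "G $ 1 = F $ (m+1)" by (simp_all add: G_def)
  have V0: "V $ 0 = -1" and V1: "V $ 1 = 1" by (simp_all add: V_def)
  have GS0: "(G oo S) $ 0 = F $ m" using G0 by simp
  have GS1: "(G oo S) $ 1 = - F $ (m+1)" using G1 S1 by (simp add: fps_compose_nth)
  have W0: "W $ 0 = (-1)^m * F $ m" using GS0 V0 by (simp add: W_def fps_mult_nth fps_nth_power_0)
  have W1: "W $ 1 = (-1)^m * (- F $ (m+1) - of_nat m * F $ m)"
  proof -
    have "W $ 1 = (G oo S)$0 * (V^m)$1 + (G oo S)$1 * (V^m)$0"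
      by (simp add: W_def fps_mult_nth numeral_2_eq_2)
    also have "\<dots> = F$m * (of_nat m * (-1)^(m-1)) + (- F$(m+1)) * (-1)^m"
      using GS0 GS1 V0 V1 by (simp add: pow_nth1[simplified] fps_nth_power_0)
    also have "\<dots> = (-1)^m * (- F $ (m+1) - of_nat m * F $ m)"
      by (cases m) (simp_all add: algebra_simps)
    finally show ?thesis .
  qed
  have BW0: "(B*W) $ 0 = W $ 0" by (simp add: B_def)
  have BW1: "(B*W) $ 1 = W $ 1 - lam * W $ 0" by (simp add: B_def fps_mult_nth numeral_2_eq_2)
  have a: "F $ m \<noteq> 0" using nz by (simp add: m_def)
  have e0: "F $ m = - c * ((-1)^m * F $ m)" using Fk[of 0] unfolding BW0 W0 by simp
  have e1: "F $ (m+1) = - c * ((-1)^m * (- F $ (m+1) - of_nat m * F $ m) - lam * ((-1)^m * F $ m))"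
    using Fk[of 1] unfolding BW1 W0 W1 by simp
  have cc: "- c * (-1)^m = 1" using e0 a by (metis mult.assoc mult_cancel_right1 mult.commute)
  from e1 have "F $ (m+1) = (- c * (-1)^m) * (- F $ (m+1) - of_nat m * F $ m - lam * F $ m)"
    by (simp add: algebra_simps)
  with cc have "F $ (m+1) = - F $ (m+1) - of_nat m * F $ m - lam * F $ m" by simp
  then have "2 * F $ (m+1) = - (F $ m) * (lam + of_nat m)" by (simp add: algebra_simps eq_neg_iff_add_eq_0)
  then show ?thesis unfolding m_def[symmetric] by (simp add: field_simps)
qed

theorem theorem4p4:
  fixes Lsharp Lflat :: "'a::field_char_0 fps"
    and logQ chiQ cQ :: "'a"
  assumes chiQ: "chiQ = 1 \<or> chiQ = -1"
    and cQ: "cQ = 1 \<or> cQ = -1"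
    and fe_sharp: "satisfies_FE logQ chiQ cQ Lsharp"
    and fe_flat: "satisfies_FE logQ chiQ cQ Lflat"
    and nz_sharp: "Lsharp \<noteq> 0"
    and nz_flat: "Lflat \<noteq> 0"
  shows "fps_nth Lsharp (subdegree Lsharp + 1)
           = - (fps_nth Lsharp (subdegree Lsharp)) / 2 * (logQ + of_nat (subdegree Lsharp))
       \<and> fps_nth Lflat (subdegree Lflat + 1)
           = - (fps_nth Lflat (subdegree Lflat)) / 2 * (logQ + of_nat (subdegree Lflat))"
  using main[OF fe_sharp nz_sharp] main[OF fe_flat nz_flat] by simp

end
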